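(* On $\mathbb{R}^6$ with coordinates $(q_1,q_2,q_3,p_1,p_2,p_3)$ let $J_2=\begin{pmatrix}0&I_3\\-I_3&0\end{pmatrix}$ and let $J_3$ be the antisymmetric matrix (rows/columns ordered $q_1,q_2,q_3,p_1,p_2,p_3$) with upper-triangular entries $(J_3)_{12}=(J_3)_{13}=(J_3)_{14}=-e^{p_1}$, $(J_3)_{15}=(J_3)_{16}=0$, $(J_3)_{23}=-e^{p_2}$, $(J_3)_{24}=-e^{q_2-q_1}$, $(J_3)_{25}=-e^{p_2}+e^{q_2-q_1}$, $(J_3)_{26}=0$, $(J_3)_{34}=-e^{q_2-q_1}$, $(J_3)_{35}=e^{q_2-q_1}-e^{q_3-q_2}$, $(J_3)_{36}=-e^{p_3}+e^{q_3-q_2}$, $(J_3)_{45}=e^{q_2-q_1}$, $(J_3)_{46}=0$, $(J_3)_{56}=e^{q_3-q_2}$. Let $\mathcal{N}=J_2J_3^{-1}$ and $J_1=\mathcal{N}J_2$. Let $\Phi:\mathbb{R}^6\to\mathbb{R}^5$ be given by $u_1=-e^{p_1}$, $u_3=-e^{p_2}$, $u_5=-e^{p_3}$, $u_2=e^{q_2-q_1}$, $u_4=e^{q_3-q_2}$. Then $\Phi$ maps $J_1$ to the Poisson bracket $\pi_1$ on $\mathbb{R}^5$ (i.e. $\{f\circ\Phi,g\circ\Phi\}_{J_1}=\{f,g\}_{\pi_1}\circ\Phi$) given by $\{u_1,u_2\}=u_2$, $\{u_1,u_3\}=-u_2$, $\{u_1,u_4\}=\frac{u_2u_4}{u_3}$,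 $\{u_1,u_5\}=-\frac{u_2u_4}{u_3}$, $\{u_2,u_3\}=u_2$, $\{u_2,u_4\}=-\frac{u_2u_4}{u_3}$, $\{u_2,u_5\}=\frac{u_2u_4}{u_3}$, $\{u_3,u_4\}=u_4$, $\{u_3,u_5\}=-u_4$, $\{u_4,u_5\}=u_4$.
   Context: A bracket given by an antisymmetric matrix $J$ on $\mathbb{R}^m$ with coordinates $x_k$ is $\{f,g\}_J=\sum_{k,l}J_{kl}\,\partial_{x_k}f\,\partial_{x_l}g$. *)

theory Defs
  imports "HOL-Analysis.Analysis" "HOL-Library.Numeral_Type"
begin

definition pdiff :: "(real^'n \<Rightarrow> real) \<Rightarrow> real^'n \<Rightarrow> 'n \<Rightarrow> real" where
  "pdiff f x k = frechet_derivative f (at x) (axis k 1)"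

definition pbracket ::
  "(real^'n \<Rightarrow> real^'n^'n) \<Rightarrow> (real^'n \<Rightarrow> real) \<Rightarrow> (real^'n \<Rightarrow> real) \<Rightarrow> real^'n \<Rightarrow> real" where
  "pbracket J f g x = (\<Sum>k\<in>UNIV. \<Sum>l\<in>UNIV. J x $ k $ l * pdiff f x k * pdiff g x l)"

text \<open>Coordinate numbering 1..6 on real^6 (q1,q2,q3,p1,p2,p3); note (6::6) = 0.\<close>
definition idx6 :: "6 \<Rightarrow> nat" where
  "idx6 a = (if a = 1 then 1 else if a = 2 then 2 else if a = 3 then 3
             else if a = 4 then 4 else if a = 5 then 5 else 6)"

definition idx5 :: "5 \<Rightarrow> nat" where
  "idx5 a = (if a = 1 then 1 else if a = 2 then 2 else if a = 3 then 3
             else if a = 4 then 4 else 5)"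

definition q1 :: "real^6 \<Rightarrow> real" where "q1 x = x $ 1"
definition q2 :: "real^6 \<Rightarrow> real" where "q2 x = x $ 2"
definition q3 :: "real^6 \<Rightarrow> real" where "q3 x = x $ 3"
definition p1 :: "real^6 \<Rightarrow> real" where "p1 x = x $ 4"
definition p2 :: "real^6 \<Rightarrow> real" where "p2 x = x $ 5"
definition p3 :: "real^6 \<Rightarrow> real" where "p3 x = x $ 6"

definition J2 :: "real^6^6" where
  "J2 = (\<chi> a b. if idx6 a \<le> 3 \<and> idx6 b = idx6 a + 3 then 1
               else if idx6 a \<ge> 4 \<and> idx6 a = idx6 b + 3 then -1 else 0)"

definition J3u :: "real^6 \<Rightarrow> nat \<Rightarrow> nat \<Rightarrow> real" where
  "J3u x i j =
    (if (i, j) = (1,2) \<or> (i, j) = (1,3) \<or> (i, j) = (1,4) then - exp (p1 x)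
     else if (i, j) = (2,3) then - exp (p2 x)
     else if (i, j) = (2,4) then - exp (q2 x - q1 x)
     else if (i, j) = (2,5) then - exp (p2 x) + exp (q2 x - q1 x)
     else if (i, j) = (3,4) then - exp (q2 x - q1 x)
     else if (i, j) = (3,5) then exp (q2 x - q1 x) - exp (q3 x - q2 x)
     else if (i, j) = (3,6) then - exp (p3 x) + exp (q3 x - q2 x)
     else if (i, j) = (4,5) then exp (q2 x - q1 x)
     else if (i, j) = (5,6) then exp (q3 x - q2 x)
     else 0)"

definition J3 :: "real^6 \<Rightarrow> real^6^6" where
  "J3 x = (\<chi> a b. if idx6 a < idx6 b then J3u x (idx6 a) (idx6 b)
                  else if idx6 b < idx6 a then - J3u x (idx6 b) (idx6 a) else 0)"

definition NN :: "real^6 \<Rightarrow> real^6^6" where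
  "NN x = J2 ** matrix_inv (J3 x)"

definition J1 :: "real^6 \<Rightarrow> real^6^6" where
  "J1 x = NN x ** J2"

definition Phi :: "real^6 \<Rightarrow> real^5" where
  "Phi x = (\<chi> a. if idx5 a = 1 then - exp (p1 x)
                 else if idx5 a = 2 then exp (q2 x - q1 x)
                 else if idx5 a = 3 then - exp (p2 x)
                 else if idx5 a = 4 then exp (q3 x - q2 x)
                 else - exp (p3 x))"

definition pi1u :: "real^5 \<Rightarrow> nat \<Rightarrow> nat \<Rightarrow> real" where
  "pi1u u i j =
    (let u2 = u $ 2; u3 = u $ 3; u4 = u $ 4 in
     if (i, j) = (1,2) then u2
     else if (i, j) = (1,3) then - u2
     else if (i, j) = (1,4) then u2 * u4 / u3
     else if (i, j) = (1,5) then - (u2 * u4 / u3)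
     else if (i, j) = (2,3) then u2
     else if (i, j) = (2,4) then - (u2 * u4 / u3)
     else if (i, j) = (2,5) then u2 * u4 / u3
     else if (i, j) = (3,4) then u4
     else if (i, j) = (3,5) then - u4
     else if (i, j) = (4,5) then u4
     else 0)"

definition pi1 :: "real^5 \<Rightarrow> real^5^5" where
  "pi1 u = (\<chi> a b. if idx5 a < idx5 b then pi1u u (idx5 a) (idx5 b)
                  else if idx5 b < idx5 a then - pi1u u (idx5 b) (idx5 a) else 0)"

end

theory Submission imports Defs begin

lemma exhaust_6: fixes x :: 6 shows "x = 1 \<or> x = 2 \<or> x = 3 \<or> x = 4 \<or> x = 5 \<or> x = 6"
proof (induct x)
  case (of_int z)
  then have "z = 0 \<or> z = 1 \<or> z = 2 \<or> z = 3 \<or> z = 4 \<or> z = 5" by fastforce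
  then show ?case by auto
qed
lemma UNIV_6: "(UNIV::6 set) = {1,2,3,4,5,6}" using exhaust_6 by auto
lemma sum_6: "sum f (UNIV::6 set) = f 1 + f 2 + f 3 + f 4 + f 5 + f 6"
  unfolding UNIV_6 by (simp add: ac_simps)
lemma forall_6: "(\<forall>i::6. P i) \<longleftrightarrow> P 1 \<and> P 2 \<and> P 3 \<and> P 4 \<and> P 5 \<and> P 6"
  by (metis exhaust_6)

lemma exhaust_5: fixes x :: 5 shows "x = 1 \<or> x = 2 \<or> x = 3 \<or> x = 4 \<or> x = 5"
proof (induct x)
  case (of_int z)
  then have "z = 0 \<or> z = 1 \<or> z = 2 \<or> z = 3 \<or> z = 4" by fastforce
  then show ?case by auto
qed
lemma UNIV_5: "(UNIV::5 set) = {1,2,3,4,5}" using exhaust_5 by auto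
lemma sum_5: "sum f (UNIV::5 set) = f 1 + f 2 + f 3 + f 4 + f 5"
  unfolding UNIV_5 by (simp add: ac_simps)
lemma forall_5: "(\<forall>i::5. P i) \<longleftrightarrow> P 1 \<and> P 2 \<and> P 3 \<and> P 4 \<and> P 5"
  by (metis exhaust_5)

lemma idx6_simps[simp]: "idx6 1 = 1" "idx6 2 = 2" "idx6 3 = 3" "idx6 4 = 4" "idx6 5 = 5" "idx6 6 = 6"
  by (simp_all add: idx6_def)
lemma idx5_simps[simp]: "idx5 1 = 1" "idx5 2 = 2" "idx5 3 = 3" "idx5 4 = 4" "idx5 5 = 5"
  by (simp_all add: idx5_def)

definition KU :: "real \<Rightarrow> real \<Rightarrow> real \<Rightarrow> real \<Rightarrow> real \<Rightarrow> nat \<Rightarrow> nat \<Rightarrow> real" where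
  "KU a b c s t i j = (if (i,j) = (1,2) then (c * s)  else if (i,j) = (1,3) then (-s * t)  else if (i,j) = (1,4) then (b * c - c * s + s * t)  else if (i,j) = (1,5) then (-c * s + s * t)  else if (i,j) = (1,6) then (s * t)  else if (i,j) = (2,3) then (a * t)  else if (i,j) = (2,4) then (-a * t)  else if (i,j) = (2,5) then (a * c - a * t)  else if (i,j) = (2,6) then (-a * t)  else if (i,j) = (3,4) then (a * t)  else if (i,j) = (3,6) then (a * b)  else if (i,j) = (4,5) then (-a * c + a * t)  else if (i,j) = (4,6) then (-a * b + a * t)  else if (i,j) = (5,6) then (-a * b) else 0)"

definition Kx :: "real^6 \<Rightarrow> real^6^6" where
  "Kx x = (\<chi> i j. (let a = exp (p1 x); b = exp (p2 x); c = exp (p3 x); s = exp (q2 x - q1 x); t = exp (q3 x - q2 x) in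
     (if idx6 i < idx6 j then KU a b c s t (idx6 i) (idx6 j)
      else if idx6 j < idx6 i then - KU a b c s t (idx6 j) (idx6 i) else 0) / (a*b*c)))"

lemma J3K: "J3 x ** Kx x = mat 1"
  unfolding vec_eq_iff forall_6 matrix_matrix_mult_def mat_def
  by (simp add: sum_6 J3_def J3u_def Kx_def KU_def Let_def field_simps)

lemma KJ3: "Kx x ** J3 x = mat 1"
  unfolding vec_eq_iff forall_6 matrix_matrix_mult_def mat_def
  by (simp add: sum_6 J3_def J3u_def Kx_def KU_def Let_def field_simps)

lemma matrix_inv_J3: "matrix_inv (J3 x) = Kx x"
  unfolding matrix_inv_def
proof (rule some_equality)
  show "J3 x ** Kx x = mat 1 \<and> Kx x ** J3 x = mat 1" using J3K KJ3 by blast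
next
  fix A' assume "J3 x ** A' = mat 1 \<and> A' ** J3 x = mat 1"
  then show "A' = Kx x" by (metis J3K matrix_mul_assoc matrix_mul_lid matrix_mul_rid)
qed

definition J1U :: "real \<Rightarrow> real \<Rightarrow> real \<Rightarrow> real \<Rightarrow> real \<Rightarrow> nat \<Rightarrow> nat \<Rightarrow> real" where
  "J1U a b c s t i j = (if (i,j) = (1,2) then (a * c - a * t)  else if (i,j) = (1,3) then (a * b - a * t)  else if (i,j) = (1,4) then (-b * c + c * s - s * t)  else if (i,j) = (1,5) then (a * t)  else if (i,j) = (1,6) then (-a * t)  else if (i,j) = (2,3) then (a * b)  else if (i,j) = (2,4) then (c * s - s * t)  else if (i,j) = (2,5) then (-a * c + a * t)  else if (i,j) = (3,4) then (-s * t)  else if (i,j) = (3,5) then (a * t)  else if (i,j) = (3,6) then (-a * b)  else if (i,j) = (4,5) then (-c * s)  else if (i,j) = (4,6) then (s * t)  else if (i,j) = (5,6) then (-a * t) else 0)"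

definition J1e :: "real^6 \<Rightarrow> real^6^6" where
  "J1e x = (\<chi> i j. (let a = exp (p1 x); b = exp (p2 x); c = exp (p3 x); s = exp (q2 x - q1 x); t = exp (q3 x - q2 x) in
     (if idx6 i < idx6 j then J1U a b c s t (idx6 i) (idx6 j)
      else if idx6 j < idx6 i then - J1U a b c s t (idx6 j) (idx6 i) else 0) / (a*b*c)))"

lemma J1_eq: "J1 x = J1e x"
  unfolding J1_def NN_def matrix_inv_J3 vec_eq_iff forall_6 matrix_matrix_mult_def
  by (simp add: sum_6 J2_def Kx_def KU_def J1e_def J1U_def Let_def field_simps)

definition DPm :: "real^6 \<Rightarrow> real^6^5" where
  "DPm x = (\<chi> i k. if idx5 i = 1 then (if idx6 k = 4 then - exp (p1 x) else 0)
     else if idx5 i = 2 then (if idx6 k = 1 then - exp (q2 x - q1 x) else if idx6 k = 2 then exp (q2 x - q1 x) else 0)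
     else if idx5 i = 3 then (if idx6 k = 5 then - exp (p2 x) else 0)
     else if idx5 i = 4 then (if idx6 k = 2 then - exp (q3 x - q2 x) else if idx6 k = 3 then exp (q3 x - q2 x) else 0)
     else (if idx6 k = 6 then - exp (p3 x) else 0))"

lemma has_derivative_vec_nth': "((\<lambda>x. x $ i) has_derivative (\<lambda>h. h $ i)) F"
  using bounded_linear.has_derivative[OF bounded_linear_vec_nth, of "\<lambda>x. x" "\<lambda>x. x"] by simp

lemma has_derivative_cart:
  fixes f :: "real^6 \<Rightarrow> real^'n"
  assumes "\<And>i. ((\<lambda>y. f y $ i) has_derivative (\<lambda>h. f' h $ i)) (at x)"
  shows "(f has_derivative f') (at x)"
  using has_derivative_componentwise_within[of f f' x UNIV] assms
  by (auto simp: Basis_vec_def inner_axis)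

lemma dPhi: "(Phi has_derivative (\<lambda>h. DPm x *v h)) (at x)"
proof (rule has_derivative_cart)
  fix i :: 5
  have "\<forall>i. ((\<lambda>y. Phi y $ i) has_derivative (\<lambda>h. (DPm x *v h) $ i)) (at x)"
    unfolding forall_5
    by (simp add: Phi_def DPm_def matrix_vector_mult_def sum_6 p1_def p2_def p3_def q1_def q2_def q3_def)
       (intro conjI; auto intro!: derivative_eq_intros has_derivative_vec_nth' simp: algebra_simps)
  then show "((\<lambda>y. Phi y $ i) has_derivative (\<lambda>h. (DPm x *v h) $ i)) (at x)" by blast
qed

lemma linear_expand:
  fixes L :: "real^'n \<Rightarrow> real"
  assumes "linear L"
  shows "L v = (\<Sum>i\<in>UNIV. v $ i * L (axis i 1))"
proof -
  have "L v = L (\<Sum>i\<in>UNIV. v $ i *\<^sub>R axis i 1)"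
    using basis_expansion[of v] by (simp add: scalar_mult_eq_scaleR)
  also have "\<dots> = (\<Sum>i\<in>UNIV. v $ i * L (axis i 1))"
    using assms by (simp add: linear_sum linear_scale)
  finally show ?thesis .
qed

lemma pdiff_comp:
  assumes "\<And>y. f differentiable (at y)"
  shows "pdiff (f \<circ> Phi) x k = (\<Sum>i\<in>UNIV. DPm x $ i $ k * pdiff f (Phi x) i)"
proof -
  let ?Df = "frechet_derivative f (at (Phi x))"
  have df: "(f has_derivative ?Df) (at (Phi x))" using assms frechet_derivative_works by blast
  have "((f \<circ> Phi) has_derivative (?Df \<circ> (\<lambda>h. DPm x *v h))) (at x)"
    by (rule diff_chain_at[OF dPhi df])
  then have fd: "frechet_derivative (f \<circ> Phi) (at x) = ?Df \<circ> (\<lambda>h. DPm x *v h)"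
    by (rule frechet_derivative_at[symmetric])
  have lin: "linear ?Df" using df has_derivative_linear by blast
  have col: "(DPm x *v axis k 1) $ i = DPm x $ i $ k" for i
    by (simp add: matrix_vector_mult_def axis_def if_distrib cong: if_cong)
  show ?thesis
    unfolding pdiff_def fd comp_apply
    using linear_expand[OF lin, of "DPm x *v axis k 1"] by (simp add: col)
qed

lemma swap4:
  fixes X :: "'k \<Rightarrow> 'k \<Rightarrow> 'i \<Rightarrow> 'i \<Rightarrow> real"
  shows "(\<Sum>k\<in>A. \<Sum>l\<in>A. \<Sum>i\<in>B. \<Sum>j\<in>B. X k l i j) = (\<Sum>i\<in>B. \<Sum>j\<in>B. \<Sum>k\<in>A. \<Sum>l\<in>A. X k l i j)"
proof -
  have "(\<Sum>k\<in>A. \<Sum>l\<in>A. \<Sum>i\<in>B. \<Sum>j\<in>B. X k l i j) = (\<Sum>k\<in>A. \<Sum>i\<in>B. \<Sum>l\<in>A. \<Sum>j\<in>B. X k l i j)"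
    by (rule sum.cong[OF refl], rule sum.swap)
  also have "\<dots> = (\<Sum>k\<in>A. \<Sum>i\<in>B. \<Sum>j\<in>B. \<Sum>l\<in>A. X k l i j)"
    by (rule sum.cong[OF refl], rule sum.cong[OF refl], rule sum.swap)
  also have "\<dots> = (\<Sum>i\<in>B. \<Sum>k\<in>A. \<Sum>j\<in>B. \<Sum>l\<in>A. X k l i j)"
    by (rule sum.swap)
  also have "\<dots> = (\<Sum>i\<in>B. \<Sum>j\<in>B. \<Sum>k\<in>A. \<Sum>l\<in>A. X k l i j)"
    by (rule sum.cong[OF refl], rule sum.swap)
  finally show ?thesis .
qed

lemma rearr:
  fixes J :: "'k \<Rightarrow> 'k \<Rightarrow> real" and D :: "'i \<Rightarrow> 'k \<Rightarrow> real"
  shows "(\<Sum>k\<in>UNIV. \<Sum>l\<in>UNIV. J k l * (\<Sum>i\<in>UNIV. D i k * F i) * (\<Sum>j\<in>UNIV. D j l * G j))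
       = (\<Sum>i\<in>UNIV. \<Sum>j\<in>UNIV. (\<Sum>k\<in>UNIV. \<Sum>l\<in>UNIV. D i k * J k l * D j l) * F i * G j)"
proof -
  have "(\<Sum>k\<in>UNIV. \<Sum>l\<in>UNIV. J k l * (\<Sum>i\<in>UNIV. D i k * F i) * (\<Sum>j\<in>UNIV. D j l * G j))
     = (\<Sum>k\<in>UNIV. \<Sum>l\<in>UNIV. \<Sum>i\<in>UNIV. \<Sum>j\<in>UNIV. D i k * J k l * D j l * F i * G j)"
    by (simp add: sum_distrib_left sum_distrib_right mult_ac)
  also have "\<dots> = (\<Sum>i\<in>UNIV. \<Sum>j\<in>UNIV. \<Sum>k\<in>UNIV. \<Sum>l\<in>UNIV. D i k * J k l * D j l * F i * G j)"
    by (rule swap4)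
  also have "\<dots> = (\<Sum>i\<in>UNIV. \<Sum>j\<in>UNIV. (\<Sum>k\<in>UNIV. \<Sum>l\<in>UNIV. D i k * J k l * D j l) * F i * G j)"
    by (simp add: sum_distrib_right)
  finally show ?thesis .
qed

lemma DPsum:
  "(\<Sum>k\<in>UNIV. DPm x $ 1 $ k * h k) = - exp (p1 x) * h 4"
  "(\<Sum>k\<in>UNIV. DPm x $ 2 $ k * h k) = exp (q2 x - q1 x) * (h 2 - h 1)"
  "(\<Sum>k\<in>UNIV. DPm x $ 3 $ k * h k) = - exp (p2 x) * h 5"
  "(\<Sum>k\<in>UNIV. DPm x $ 4 $ k * h k) = exp (q3 x - q2 x) * (h 3 - h 2)"
  "(\<Sum>k\<in>UNIV. DPm x $ 5 $ k * h k) = - exp (p3 x) * h 6"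
  by (simp_all add: sum_6 DPm_def algebra_simps)

lemma J1e_tab: "J1e x $ k $ l = (let a = exp (p1 x); b = exp (p2 x); c = exp (p3 x); s = exp (q2 x - q1 x); t = exp (q3 x - q2 x) in
     (if idx6 k < idx6 l then J1U a b c s t (idx6 k) (idx6 l)
      else if idx6 l < idx6 k then - J1U a b c s t (idx6 l) (idx6 k) else 0) / (a*b*c))"
  by (simp add: J1e_def)

lemma Mentries: "\<forall>i j. (\<Sum>k\<in>UNIV. \<Sum>l\<in>UNIV. DPm x $ i $ k * J1e x $ k $ l * DPm x $ j $ l) = pi1 (Phi x) $ i $ j"
proof -
  have e: "(\<Sum>k\<in>UNIV. \<Sum>l\<in>UNIV. DPm x $ i $ k * J1e x $ k $ l * DPm x $ j $ l)
      = (\<Sum>k\<in>UNIV. DPm x $ i $ k * (\<Sum>l\<in>UNIV. DPm x $ j $ l * J1e x $ k $ l))" for i j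
    by (simp add: sum_distrib_left mult_ac)
  show ?thesis
    unfolding e forall_5 DPsum
    by (simp add: J1e_tab J1U_def pi1_def pi1u_def Phi_def Let_def field_simps)
qed

theorem mainTheorem3:
  fixes f g :: "real^5 \<Rightarrow> real"
  assumes "\<And>y. f differentiable (at y)"
      and "\<And>y. g differentiable (at y)"
  shows "\<forall>x. pbracket J1 (f \<circ> Phi) (g \<circ> Phi) x = pbracket pi1 f g (Phi x)"
proof
  fix x
  have "pbracket J1 (f \<circ> Phi) (g \<circ> Phi) x = (\<Sum>k\<in>UNIV. \<Sum>l\<in>UNIV. J1e x $ k $ l * (\<Sum>i\<in>UNIV. DPm x $ i $ k * pdiff f (Phi x) i) * (\<Sum>j\<in>UNIV. DPm x $ j $ l * pdiff g (Phi x) j))"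
    unfolding pbracket_def pdiff_comp[OF assms(1)] pdiff_comp[OF assms(2)] J1_eq ..
  also have "\<dots> = (\<Sum>i\<in>UNIV. \<Sum>j\<in>UNIV. (\<Sum>k\<in>UNIV. \<Sum>l\<in>UNIV. DPm x $ i $ k * J1e x $ k $ l * DPm x $ j $ l) * pdiff f (Phi x) i * pdiff g (Phi x) j)"
    by (rule rearr)
  also have "\<dots> = pbracket pi1 f g (Phi x)"
    unfolding pbracket_def by (simp add: Mentries)
  finally show "pbracket J1 (f \<circ> Phi) (g \<circ> Phi) x = pbracket pi1 f g (Phi x)" .
qed

end
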